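(* Every threshold graph is edge simplicial and co-edge simplicial. Moreover, there exists a graph that is edge simplicial and co-edge simplicial but not threshold.
   Context: A graph is threshold if it has no induced subgraph isomorphic to $2K_2$, $C_4$ or $P_4$ (equivalently, its vertex set partitions into a stable set $I$ and a clique $K$ such that the vertices of $I$ can be ordered $u_1,\dots,u_k$ with $N(u_1)\subseteq\cdots\subseteq N(u_k)$). A clique $C$ is simplicial if $C=N[v]$ for some vertex $v$; a graph is edge simplicial if every edge lies in a simplicial clique, and co-edge simplicial if its complement is edge simplicial. *)

theory Defs
  imports Main
begin

definition graph :: "'a set \<Rightarrow> ('a \<Rightarrow> 'a \<Rightarrow> bool) \<Rightarrow> bool" where
  "graph V E \<longleftrightarrow> finite V \<and> (\<forall>x\<in>V. \<forall>y\<in>V. E x y \<longrightarrow> E y x) \<and> (\<forall>x\<in>V. \<not> E x x)"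

definition has_induced :: "'a set \<Rightarrow> ('a \<Rightarrow> 'a \<Rightarrow> bool) \<Rightarrow> 'b set \<Rightarrow> ('b \<Rightarrow> 'b \<Rightarrow> bool) \<Rightarrow> bool" where
  "has_induced V E W F \<longleftrightarrow>
     (\<exists>f. inj_on f W \<and> f ` W \<subseteq> V \<and> (\<forall>x\<in>W. \<forall>y\<in>W. E (f x) (f y) \<longleftrightarrow> F x y))"

definition twoK2 :: "nat \<Rightarrow> nat \<Rightarrow> bool" where
  "twoK2 x y \<longleftrightarrow> {x, y} = {0, 1} \<or> {x, y} = {2, 3}"

definition C4 :: "nat \<Rightarrow> nat \<Rightarrow> bool" where
  "C4 x y \<longleftrightarrow> {x, y} = {0, 1} \<or> {x, y} = {1, 2} \<or> {x, y} = {2, 3} \<or> {x, y} = {3, 0}"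

definition P4 :: "nat \<Rightarrow> nat \<Rightarrow> bool" where
  "P4 x y \<longleftrightarrow> {x, y} = {0, 1} \<or> {x, y} = {1, 2} \<or> {x, y} = {2, 3}"

definition threshold :: "'a set \<Rightarrow> ('a \<Rightarrow> 'a \<Rightarrow> bool) \<Rightarrow> bool" where
  "threshold V E \<longleftrightarrow>
     \<not> has_induced V E {0..3} twoK2 \<and> \<not> has_induced V E {0..3} C4 \<and> \<not> has_induced V E {0..3} P4"

definition clique :: "'a set \<Rightarrow> ('a \<Rightarrow> 'a \<Rightarrow> bool) \<Rightarrow> 'a set \<Rightarrow> bool" where
  "clique V E C \<longleftrightarrow> C \<subseteq> V \<and> (\<forall>x\<in>C. \<forall>y\<in>C. x \<noteq> y \<longrightarrow> E x y)"

definition closed_nbhd :: "'a set \<Rightarrow> ('a \<Rightarrow> 'a \<Rightarrow> bool) \<Rightarrow> 'a \<Rightarrow> 'a set" where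
  "closed_nbhd V E v = {u \<in> V. u = v \<or> E v u}"

definition simplicial_clique :: "'a set \<Rightarrow> ('a \<Rightarrow> 'a \<Rightarrow> bool) \<Rightarrow> 'a set \<Rightarrow> bool" where
  "simplicial_clique V E C \<longleftrightarrow> clique V E C \<and> (\<exists>v\<in>V. C = closed_nbhd V E v)"

definition edge_simplicial :: "'a set \<Rightarrow> ('a \<Rightarrow> 'a \<Rightarrow> bool) \<Rightarrow> bool" where
  "edge_simplicial V E \<longleftrightarrow>
     (\<forall>x\<in>V. \<forall>y\<in>V. E x y \<longrightarrow> (\<exists>C. simplicial_clique V E C \<and> x \<in> C \<and> y \<in> C))"

definition compl_rel :: "('a \<Rightarrow> 'a \<Rightarrow> bool) \<Rightarrow> 'a \<Rightarrow> 'a \<Rightarrow> bool" where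
  "compl_rel E x y \<longleftrightarrow> x \<noteq> y \<and> \<not> E x y"

definition co_edge_simplicial :: "'a set \<Rightarrow> ('a \<Rightarrow> 'a \<Rightarrow> bool) \<Rightarrow> bool" where
  "co_edge_simplicial V E \<longleftrightarrow> edge_simplicial V (compl_rel E)"

end

theory Submission
  imports Defs
begin

lemma P4_iff: "P4 x y \<longleftrightarrow> (x=0\<and>y=1 \<or> x=1\<and>y=0 \<or> x=1\<and>y=2 \<or> x=2\<and>y=1 \<or> x=2\<and>y=3 \<or> x=3\<and>y=2)"
  by (auto simp: P4_def doubleton_eq_iff)
lemma C4_iff: "C4 x y \<longleftrightarrow> (x=0\<and>y=1 \<or> x=1\<and>y=0 \<or> x=1\<and>y=2 \<or> x=2\<and>y=1 \<or> x=2\<and>y=3 \<or> x=3\<and>y=2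
   \<or> x=3\<and>y=0 \<or> x=0\<and>y=3)"
  by (auto simp: C4_def doubleton_eq_iff)
lemma twoK2_iff: "twoK2 x y \<longleftrightarrow> (x=0\<and>y=1 \<or> x=1\<and>y=0 \<or> x=2\<and>y=3 \<or> x=3\<and>y=2)"
  by (auto simp: twoK2_def doubleton_eq_iff)

lemma four: "{0..3::nat} = {0,1,2,3}" by auto

lemma mk_ind:
  assumes "distinct [a,b,c,d]" "set [a,b,c,d] \<subseteq> V"
    "\<forall>i\<in>{0,1,2,3::nat}. \<forall>j\<in>{0,1,2,3}. E ([a,b,c,d]!i) ([a,b,c,d]!j) = F i j"
  shows "has_induced V E {0..3} F"
  unfolding has_induced_def
proof (intro exI[of _ "\<lambda>i. [a,b,c,d]!i"] conjI)
  show "inj_on (\<lambda>i. [a,b,c,d]!i) {0..3}"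
    using assms(1) unfolding inj_on_def four by (auto simp: nth_eq_iff_index_eq)
  show "(\<lambda>i. [a,b,c,d]!i) ` {0..3} \<subseteq> V" using assms(2) unfolding four by auto
  show "\<forall>x\<in>{0..3}. \<forall>y\<in>{0..3}. E ([a,b,c,d]!x) ([a,b,c,d]!y) = F x y"
    using assms(3) unfolding four by blast
qed

lemma nbhd_sub:
  assumes g: "graph V E" and t: "threshold V E" and vV: "v \<in> V"
    and aN: "a \<in> closed_nbhd V E v" and bN: "b \<in> closed_nbhd V E v" and ab: "a \<noteq> b" "\<not> E a b"
  shows "closed_nbhd V E a \<subset> closed_nbhd V E v"
proof -
  have sym: "\<And>x y. x\<in>V \<Longrightarrow> y\<in>V \<Longrightarrow> E x y \<Longrightarrow> E y x" and irr: "\<And>x. x\<in>V \<Longrightarrow> \<not> E x x"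
    using g unfolding graph_def by auto
  have aV: "a\<in>V" and bV: "b\<in>V" and a1: "a=v \<or> E v a" and b1: "b=v \<or> E v b"
    using aN bN unfolding closed_nbhd_def by auto
  have av: "a \<noteq> v" using a1 b1 ab by auto
  have bv: "b \<noteq> v" using a1 b1 ab sym aV vV by auto
  have va: "E v a" "E a v" using a1 av sym aV vV by auto
  have vb: "E v b" "E b v" using b1 bv sym bV vV by auto
  have ba: "\<not> E b a" using ab sym aV bV by auto
  have sub: "closed_nbhd V E a \<subseteq> closed_nbhd V E v"
  proof
    fix p assume p: "p \<in> closed_nbhd V E a"
    hence pV: "p \<in> V" and p1: "p = a \<or> E a p" unfolding closed_nbhd_def by auto
    show "p \<in> closed_nbhd V E v"
    proof (rule ccontr)
      assume np: "p \<notin> closed_nbhd V E v"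
      hence pa: "p \<noteq> a" and pv: "p \<noteq> v" and vp: "\<not> E v p" "\<not> E p v"
        using pV aN sym vV unfolding closed_nbhd_def by auto
      have ap: "E a p" "E p a" using p1 pa sym aV pV by auto
      have pb: "p \<noteq> b" using ap ab by auto
      show False
      proof (cases "E p b")
        case True
        hence "E b p" using sym pV bV by auto
        have "has_induced V E {0..3} C4"
          apply (rule mk_ind[of a p b v])
          using ab av bv pa pv pb aV bV vV pV apply auto[2]
          using True \<open>E b p\<close> ap va vb vp ba ab irr aV bV vV pV by (simp add: C4_iff)
        thus False using t unfolding threshold_def by auto
      next
        case False
        hence "\<not> E b p" using sym pV bV by auto
        have "has_induced V E {0..3} P4"
          apply (rule mk_ind[of p a v b])
          using ab av bv pa pv pb aV bV vV pV apply auto[2]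
          using False \<open>\<not> E b p\<close> ap va vb vp ba ab irr aV bV vV pV by (simp add: P4_iff)
        thus False using t unfolding threshold_def by auto
      qed
    qed
  qed
  moreover have "b \<in> closed_nbhd V E v" "b \<notin> closed_nbhd V E a"
    using bN ab unfolding closed_nbhd_def by auto
  ultimately show ?thesis by blast
qed


lemma thr_es:
  assumes g: "graph V E" and t: "threshold V E"
  shows "edge_simplicial V E"
  unfolding edge_simplicial_def
proof (intro ballI impI)
  have sym: "\<And>x y. x\<in>V \<Longrightarrow> y\<in>V \<Longrightarrow> E x y \<Longrightarrow> E y x" and fin: "finite V"
    using g unfolding graph_def by auto
  fix x y assume xV: "x \<in> V" and yV: "y \<in> V" and xy: "E x y"
  define S where "S = {v\<in>V. x \<in> closed_nbhd V E v \<and> y \<in> closed_nbhd V E v}"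
  have xS: "x \<in> S" and yS: "y \<in> S"
    using xV yV xy sym unfolding S_def closed_nbhd_def by auto
  obtain v where vS: "v \<in> S" and vmin: "\<And>w. w \<in> S \<Longrightarrow> card (closed_nbhd V E v) \<le> card (closed_nbhd V E w)"
    using ex_has_least_nat[of "\<lambda>v. v \<in> S" x "\<lambda>v. card (closed_nbhd V E v)"] xS by blast
  have vV: "v \<in> V" using vS unfolding S_def by auto
  have finN: "\<And>u. finite (closed_nbhd V E u)" using fin unfolding closed_nbhd_def by auto
  have lt: "\<And>a b. a \<in> closed_nbhd V E v \<Longrightarrow> b \<in> closed_nbhd V E v \<Longrightarrow> a \<noteq> b \<Longrightarrow> \<not> E a b
      \<Longrightarrow> card (closed_nbhd V E a) < card (closed_nbhd V E v)"
    using nbhd_sub[OF g t vV] finN by (simp add: psubset_card_mono)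
  have cl: "clique V E (closed_nbhd V E v)"
    unfolding clique_def
  proof (intro conjI ballI impI)
    show "closed_nbhd V E v \<subseteq> V" unfolding closed_nbhd_def by auto
    fix a b assume aN: "a \<in> closed_nbhd V E v" and bN: "b \<in> closed_nbhd V E v" and ab: "a \<noteq> b"
    show "E a b"
    proof (rule ccontr)
      assume nab: "\<not> E a b"
      have c1: "card (closed_nbhd V E a) < card (closed_nbhd V E v)" using lt aN bN ab nab by blast
      have aV: "a \<in> V" using aN unfolding closed_nbhd_def by auto
      have "a \<notin> S" using c1 vmin by fastforce
      then obtain z where zxy: "z = x \<or> z = y" and zn: "z \<notin> closed_nbhd V E a"
        using aV unfolding S_def by auto
      have zS: "z \<in> S" using zxy xS yS by auto
      have zN: "z \<in> closed_nbhd V E v" using zS vS zxy unfolding S_def by auto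
      have zV: "z \<in> V" using zS unfolding S_def by auto
      have za: "z \<noteq> a" "\<not> E z a" using zn zV aV sym unfolding closed_nbhd_def by auto
      have "card (closed_nbhd V E z) < card (closed_nbhd V E v)" using lt[OF zN aN za] .
      thus False using vmin[OF zS] by simp
    qed
  qed
  show "\<exists>C. simplicial_clique V E C \<and> x \<in> C \<and> y \<in> C"
    using cl vV vS unfolding simplicial_clique_def S_def by blast
qed

lemma compl_ind:
  assumes g: "graph V E" and h: "has_induced V (compl_rel E) W F"
    and gW: "g ` W' \<subseteq> W" and ig: "inj_on g W'"
    and H: "\<forall>x\<in>W'. \<forall>y\<in>W'. H x y \<longleftrightarrow> (x \<noteq> y \<and> \<not> F (g x) (g y))"
  shows "has_induced V E W' H"
proof -
  obtain f where inj: "inj_on f W" and fW: "f ` W \<subseteq> V"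
    and fe: "\<forall>x\<in>W. \<forall>y\<in>W. compl_rel E (f x) (f y) \<longleftrightarrow> F x y"
    using h unfolding has_induced_def by blast
  have irr: "\<And>x. x\<in>V \<Longrightarrow> \<not> E x x" using g unfolding graph_def by auto
  show ?thesis unfolding has_induced_def
  proof (intro exI[of _ "f \<circ> g"] conjI)
    show "inj_on (f \<circ> g) W'" using inj ig gW by (simp add: comp_inj_on inj_on_subset)
    show "(f \<circ> g) ` W' \<subseteq> V" using fW gW by auto
    show "\<forall>x\<in>W'. \<forall>y\<in>W'. E ((f \<circ> g) x) ((f \<circ> g) y) = H x y"
    proof (intro ballI)
      fix x y assume x: "x \<in> W'" and y: "y \<in> W'"
      show "E ((f \<circ> g) x) ((f \<circ> g) y) = H x y"
      proof (cases "x = y")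
        case True
        have "f (g x) \<in> V" using fW gW x by auto
        thus ?thesis using H x irr True by auto
      next
        case False
        hence "g x \<noteq> g y" using ig x y by (auto dest: inj_onD)
        hence "f (g x) \<noteq> f (g y)" using inj gW x y by (auto dest: inj_onD)
        moreover have "g x \<in> W" "g y \<in> W" using gW x y by auto
        moreover have "H x y = (\<not> F (g x) (g y))" using H x y False by auto
        ultimately show ?thesis using fe unfolding compl_rel_def by auto
      qed
    qed
  qed
qed

lemma compl_graph: "graph V E \<Longrightarrow> graph V (compl_rel E)"
  unfolding graph_def compl_rel_def by auto

lemma compl_thr:
  assumes g: "graph V E" and t: "threshold V E"
  shows "threshold V (compl_rel E)"
proof -
  define g1 :: "nat \<Rightarrow> nat" where "g1 = (\<lambda>i. [0,2,1,3]!i)"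
  define g2 :: "nat \<Rightarrow> nat" where "g2 = (\<lambda>i. [2,0,3,1]!i)"
  have g1a: "g1 ` {0..3} \<subseteq> {0..3}" "inj_on g1 {0..3}"
    unfolding g1_def four inj_on_def by auto
  have g2a: "g2 ` {0..3} \<subseteq> {0..3}" "inj_on g2 {0..3}"
    unfolding g2_def four inj_on_def by auto
  have A: "\<forall>x\<in>{0..3}. \<forall>y\<in>{0..3}. C4 x y \<longleftrightarrow> (x \<noteq> y \<and> \<not> twoK2 (g1 x) (g1 y))"
    unfolding four g1_def by (auto simp: C4_iff twoK2_iff)
  have B: "\<forall>x\<in>{0..3}. \<forall>y\<in>{0..3}. twoK2 x y \<longleftrightarrow> (x \<noteq> y \<and> \<not> C4 (g1 x) (g1 y))"
    unfolding four g1_def by (auto simp: C4_iff twoK2_iff)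
  have C: "\<forall>x\<in>{0..3}. \<forall>y\<in>{0..3}. P4 x y \<longleftrightarrow> (x \<noteq> y \<and> \<not> P4 (g2 x) (g2 y))"
    unfolding four g2_def by (auto simp: P4_iff)
  show ?thesis unfolding threshold_def
    using compl_ind[OF g _ g1a A] compl_ind[OF g _ g1a B] compl_ind[OF g _ g2a C] t
    unfolding threshold_def by blast
qed


definition exE :: "nat \<Rightarrow> nat \<Rightarrow> bool" where
  "exE x y \<longleftrightarrow> (x,y) \<in> {(0,1),(1,0),(1,2),(2,1),(2,3),(3,2),(1,4),(4,1),(2,4),(4,2)}"

lemma V5: "{0..4::nat} = {0,1,2,3,4}" by auto

lemma ex_graph: "graph {0..4} exE"
  unfolding graph_def V5 exE_def by auto

lemma ex_es: "edge_simplicial {0..4} exE"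
proof -
  have n0: "closed_nbhd {0..4} exE 0 = {0,1}" and n3: "closed_nbhd {0..4} exE 3 = {2,3}"
   and n4: "closed_nbhd {0..4} exE 4 = {1,2,4}"
    unfolding closed_nbhd_def V5 exE_def by auto
  have s: "simplicial_clique {0..4} exE {0,1}" "simplicial_clique {0..4} exE {2,3}"
     "simplicial_clique {0..4} exE {1,2,4}"
    unfolding simplicial_clique_def clique_def
    using n0 n3 n4 by (auto simp: exE_def V5 intro!: bexI[where x=0] bexI[where x=3] bexI[where x=4])
  show ?thesis using s unfolding edge_simplicial_def V5
    by (auto simp: exE_def)
qed

lemma ex_ces: "co_edge_simplicial {0..4} exE"
proof -
  have n2: "closed_nbhd {0..4} (compl_rel exE) 2 = {0,2}"
   and n1: "closed_nbhd {0..4} (compl_rel exE) 1 = {1,3}"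
   and n4: "closed_nbhd {0..4} (compl_rel exE) 4 = {0,3,4}"
    unfolding closed_nbhd_def V5 exE_def compl_rel_def by auto
  have s: "simplicial_clique {0..4} (compl_rel exE) {0,2}"
     "simplicial_clique {0..4} (compl_rel exE) {1,3}"
     "simplicial_clique {0..4} (compl_rel exE) {0,3,4}"
    unfolding simplicial_clique_def clique_def
    using n2 n1 n4 by (auto simp: exE_def V5 compl_rel_def intro!: bexI[where x=2] bexI[where x=1] bexI[where x=4])
  show ?thesis using s unfolding co_edge_simplicial_def edge_simplicial_def V5
    by (auto simp: exE_def compl_rel_def)
qed

lemma ex_nthr: "\<not> threshold {0..4} exE"
proof -
  have "has_induced {0..4} exE {0..3} P4"
    by (rule mk_ind[of 0 1 2 3]) (auto simp: V5 exE_def P4_iff)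
  thus ?thesis unfolding threshold_def by blast
qed

theorem corollary33:
  shows "(\<forall>(V :: 'a set) E. graph V E \<and> threshold V E \<longrightarrow>
            edge_simplicial V E \<and> co_edge_simplicial V E)
       \<and> (\<exists>(V :: nat set) E. graph V E \<and> edge_simplicial V E \<and> co_edge_simplicial V E
            \<and> \<not> threshold V E)"
proof (intro conjI allI impI)
  fix V :: "'a set" and E assume a: "graph V E \<and> threshold V E"
  thus "edge_simplicial V E" using thr_es by blast
  show "co_edge_simplicial V E" unfolding co_edge_simplicial_def
    using a thr_es compl_graph compl_thr by blast
next
  show "\<exists>(V :: nat set) E. graph V E \<and> edge_simplicial V E \<and> co_edge_simplicial V E
            \<and> \<not> threshold V E"
    using ex_graph ex_es ex_ces ex_nthr by blast
qed

end
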